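(* Let $n\ge 1$ be an integer and let $C$ be a real constant with $C>\frac{(n-4)^2}{16}$. Then $$\sum_{j=0}^n\sqrt{C+j}\;>\;(n+1)\sqrt{C+\tfrac{n}{2}-1}.$$ *)

theory Defs
  imports Complex_Main
begin

end

theory Submission
  imports Defs
begin

lemma pair_ge:
  fixes a b c d :: real
  assumes "a \<ge> 0" "b \<ge> 0" "c \<ge> 0" "d \<ge> 0" "a + b = c + d" "c * d \<le> a * b"
  shows "sqrt c + sqrt d \<le> sqrt a + sqrt b"
proof (rule power2_le_imp_le)
  have "sqrt (c*d) \<le> sqrt (a*b)" using assms by simp
  hence "c + d + 2 * sqrt (c*d) \<le> a + b + 2 * sqrt (a*b)" using assms by linarith
  thus "(sqrt c + sqrt d)^2 \<le> (sqrt a + sqrt b)^2"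
    using assms by (simp add: power2_eq_square algebra_simps real_sqrt_mult)
  show "0 \<le> sqrt a + sqrt b" using assms by simp
qed

lemma key:
  fixes n :: nat and C :: real
  assumes "n \<ge> 1" "C > (real n - 4)^2 / 16"
  shows "2 * sqrt (C + real n / 2 - 1) < sqrt C + sqrt (C + real n)"
proof -
  have C0: "C > 0"
  proof (cases "n = 4")
    case True with assms show ?thesis by simp
  next
    case False
    hence "(real n - 4)^2 > 0" by simp
    with assms show ?thesis by linarith
  qed
  show ?thesis
  proof (cases "C + real n / 2 - 1 \<le> 0")
    case True
    hence "sqrt (C + real n / 2 - 1) \<le> 0" by simp
    moreover have "sqrt C > 0" using C0 by simp
    moreover have "sqrt (C + real n) \<ge> 0" using C0 by simp
    ultimately show ?thesis by linarith
  next
    case False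
    have s: "(2*C + real n - 4)/2 < sqrt (C * (C + real n))"
    proof (cases "2*C + real n - 4 < 0")
      case True
      hence "(2*C + real n - 4)/2 < 0" by simp
      moreover have "sqrt (C * (C + real n)) \<ge> 0" using C0 by simp
      ultimately show ?thesis by (rule less_le_trans)
    next
      case F: False
      have "((2*C + real n - 4)/2)^2 < C * (C + real n)"
      proof -
        have "16 * C > (real n - 4)^2" using assms by simp
        thus ?thesis by (simp add: power2_eq_square field_simps)
      qed
      thus ?thesis by (rule real_less_rsqrt)
    qed
    show ?thesis
    proof (rule power2_less_imp_less)
      have m: "sqrt C * sqrt (C + real n) = sqrt (C * (C + real n))" by (simp add: real_sqrt_mult)
      have "(sqrt C + sqrt (C + real n))^2 = 2*C + real n + 2 * (sqrt C * sqrt (C + real n))"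
        using C0 by (simp add: power2_eq_square algebra_simps)
      hence "(sqrt C + sqrt (C + real n))^2 = 2*C + real n + 2 * sqrt (C * (C + real n))"
        using m by simp
      moreover have "(2 * sqrt (C + real n / 2 - 1))^2 = 4*C + 2*real n - 4"
        using False by (simp add: power_mult_distrib)
      ultimately show "(2 * sqrt (C + real n / 2 - 1))^2 < (sqrt C + sqrt (C + real n))^2"
      proof -
        define S where "S = sqrt (C * (C + real n))"
        define A where "A = (sqrt C + sqrt (C + real n))^2"
        define B where "B = (2 * sqrt (C + real n / 2 - 1))^2"
        have "(2*C + real n - 4)/2 < S" using s S_def by simp
        hence "2*C + real n - 4 < 2 * S" by (simp add: field_simps)
        moreover have "A = 2*C + real n + 2 * S" using calculation A_def S_def
          \<open>(sqrt C + sqrt (C + real n))^2 = 2*C + real n + 2 * sqrt (C * (C + real n))\<close> by simp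
        moreover have "B = 4*C + 2*real n - 4" using B_def
          \<open>(2 * sqrt (C + real n / 2 - 1))^2 = 4*C + 2*real n - 4\<close> by simp
        ultimately have "B < A" by linarith
        thus ?thesis using A_def B_def by simp
      qed
      show "0 \<le> sqrt C + sqrt (C + real n)" using C0 by simp
    qed
  qed
qed

theorem lemma2:
  fixes n :: nat and C :: real
  assumes "n \<ge> 1"
    and "C > (real n - 4)^2 / 16"
  shows "(\<Sum>j=0..n. sqrt (C + real j)) > real (n + 1) * sqrt (C + real n / 2 - 1)"
proof -
  have C0: "C \<ge> 0" using assms(2) by (smt (verit) zero_le_power2 divide_nonneg_pos)
  let ?f = "\<lambda>j::nat. sqrt (C + real j)"
  let ?s = "sqrt (C + real n / 2 - 1)"
  have rev: "(\<Sum>j=0..n. ?f j) = (\<Sum>j=0..n. ?f (n - j))"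
    using sum.atLeastAtMost_rev[of ?f 0 n] by simp
  have pt: "2 * ?s < ?f j + ?f (n - j)" if "j \<in> {0..n}" for j
  proof -
    have "sqrt C + sqrt (C + real n) \<le> sqrt (C + real j) + sqrt (C + real (n - j))"
    proof (rule pair_ge)
      have jn: "j \<le> n" using that by simp
      show "C + real j + (C + real (n - j)) = C + (C + real n)" using jn by simp
      have "real j * (real n - real j) \<ge> 0" using jn by simp
      thus "C * (C + real n) \<le> (C + real j) * (C + real (n - j))"
        using jn C0 by (simp add: of_nat_diff algebra_simps)
    qed (use C0 in auto)
    thus ?thesis using key[OF assms] by simp
  qed
  have "(\<Sum>j=0..n. 2 * ?s) < (\<Sum>j=0..n. ?f j + ?f (n - j))"
    by (rule sum_strict_mono) (use pt in auto)
  also have "\<dots> = 2 * (\<Sum>j=0..n. ?f j)"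
    using rev by (simp add: sum.distrib)
  finally show ?thesis by simp
qed

end
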